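(* Let $\alpha\in\{l_1,r\}$ and let $\{\rho_{a|x}\}_{a\in\{0,1\},x\in\{1,2,3\}}$ be a qubit assemblage admitting an LHS model. Then $$S:=\sum_{a,b=0}^{1}\ \sum_{(i,j,k)}p(a|i)\,p(b|j)\,C^\alpha_k(\rho'_{a|i})\,C^\alpha_k(\rho'_{b|j})\;\le\;2\Omega_\alpha=4,$$ where the inner sum runs over all ordered triples $(i,j,k)$ of pairwise distinct elements of $\{1,2,3\}$.
   Context: $\sigma_1,\sigma_2,\sigma_3$ are the Pauli matrices; "basis $k$" is the eigenbasis $\{|e^k_0\rangle,|e^k_1\rangle\}$ of $\sigma_k$. Coherence measures: $C^{l_1}_k(\rho)=\sum_{m\ne n}|\langle e^k_m|\rho|e^k_n\rangle|$ and $C^r_k(\rho)=S(\Delta_k(\rho))-S(\rho)$, with $S$ the von Neumann entropy (base 2) and $\Delta_k$ the complete dephasing in basis $k$; $\Omega_{l_1}=\Omega_r=2$. A qubit assemblage is a family of positive semidefinite operators $\rho_{a|x}$ on $\mathbb C^2$ ($a\in\{0,1\}$ outcome, $x\in\{1,2,3\}$ setting) with $\operatorname{Tr}\sum_a\rho_{a|x}=1$ for each $x$; $p(a|x)=\operatorname{Tr}\rho_{a|x}$ and $\rho'_{a|x}=\rho_{a|x}/p(a|x)$ (terms with $p(a|x)=0$ contribute zero). The assemblage admits an LHS (local hidden state) model if there exist a finite set of hidden variables $\lambda$ with probabilities $P_\lambda$, conditional probabilities $p(a|x,\lambda)\ge0$ with $\sum_a p(a|x,\lambda)=1$, and qubit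 density matrices $\rho_\lambda$ such that $\rho_{a|x}=\sum_\lambda P_\lambda\,p(a|x,\lambda)\,\rho_\lambda$ for all $a,x$. *)

theory Defs
  imports "HOL-Analysis.Analysis"
begin

text \<open>Qubit operators are 2x2 complex matrices, type complex^2^2 (indices 1,2 of type 2).\<close>

type_synonym qop = "complex^2^2"
type_synonym qvec = "complex^2"

definition mk_vec :: "complex \<Rightarrow> complex \<Rightarrow> qvec" where
  "mk_vec a b = (\<chi> i. if i = 1 then a else b)"

definition mk_mat :: "complex \<Rightarrow> complex \<Rightarrow> complex \<Rightarrow> complex \<Rightarrow> qop" where
  "mk_mat a b c d = (\<chi> i. if i = 1 then mk_vec a b else mk_vec c d)"

definition pauli :: "nat \<Rightarrow> qop" where
  "pauli k = (if k = 1 then mk_mat 0 1 1 0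
              else if k = 2 then mk_mat 0 (-\<i>) \<i> 0
              else mk_mat 1 0 0 (-1))"

text \<open>Eigenbasis of sigma_k: ebasis k 0 (eigenvalue +1), ebasis k 1 (eigenvalue -1).\<close>
definition ebasis :: "nat \<Rightarrow> nat \<Rightarrow> qvec" where
  "ebasis k m = (if k = 1 then (if m = 0 then mk_vec (1 / sqrt 2) (1 / sqrt 2)
                                      else mk_vec (1 / sqrt 2) (- 1 / sqrt 2))
                 else if k = 2 then (if m = 0 then mk_vec (1 / sqrt 2) (\<i> / sqrt 2)
                                      else mk_vec (1 / sqrt 2) (- \<i> / sqrt 2))
                 else (if m = 0 then mk_vec 1 0 else mk_vec 0 1))"

definition braket :: "qvec \<Rightarrow> qop \<Rightarrow> qvec \<Rightarrow> complex" where
  "braket u A v = (\<Sum>i\<in>UNIV. cnj (u $ i) * ((A *v v) $ i))"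

definition outer :: "qvec \<Rightarrow> qvec \<Rightarrow> qop" where
  "outer u v = (\<chi> i j. u $ i * cnj (v $ j))"

definition cscale :: "complex \<Rightarrow> qop \<Rightarrow> qop" where
  "cscale c A = (\<chi> i j. c * A $ i $ j)"

definition psd :: "qop \<Rightarrow> bool" where
  "psd A \<longleftrightarrow> (\<forall>v. Im (braket v A v) = 0 \<and> Re (braket v A v) \<ge> 0)"

definition density :: "qop \<Rightarrow> bool" where
  "density A \<longleftrightarrow> psd A \<and> trace A = 1"

definition eigvals :: "qop \<Rightarrow> complex \<times> complex" where
  "eigvals A = (SOME (l1, l2). \<forall>z. det (mat z - A) = (z - l1) * (z - l2))"

definition eta :: "real \<Rightarrow> real" where
  "eta x = (if x = 0 then 0 else - x * log 2 x)"

definition vN_entropy :: "qop \<Rightarrow> real" where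
  "vN_entropy A = (case eigvals A of (l1, l2) \<Rightarrow> eta (Re l1) + eta (Re l2))"

definition dephase :: "nat \<Rightarrow> qop \<Rightarrow> qop" where
  "dephase k A = (\<Sum>m\<in>{0,1::nat}. cscale (braket (ebasis k m) A (ebasis k m)) (outer (ebasis k m) (ebasis k m)))"

datatype coh = L1 | Rel

definition coherence :: "coh \<Rightarrow> nat \<Rightarrow> qop \<Rightarrow> real" where
  "coherence \<alpha> k A = (case \<alpha> of
       L1 \<Rightarrow> (\<Sum>(m,n)\<in>{(m,n). m \<in> {0,1::nat} \<and> n \<in> {0,1} \<and> m \<noteq> n}.
                 cmod (braket (ebasis k m) A (ebasis k n)))
     | Rel \<Rightarrow> vN_entropy (dephase k A) - vN_entropy A)"

definition Omega :: "coh \<Rightarrow> real" where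
  "Omega \<alpha> = 2"

definition assemblage :: "(nat \<Rightarrow> nat \<Rightarrow> qop) \<Rightarrow> bool" where
  "assemblage \<rho> \<longleftrightarrow> (\<forall>a\<in>{0,1}. \<forall>x\<in>{1,2,3}. psd (\<rho> a x)) \<and>
                     (\<forall>x\<in>{1,2,3}. trace (\<rho> 0 x + \<rho> 1 x) = 1)"

definition prob :: "(nat \<Rightarrow> nat \<Rightarrow> qop) \<Rightarrow> nat \<Rightarrow> nat \<Rightarrow> real" where
  "prob \<rho> a x = Re (trace (\<rho> a x))"

text \<open>Conditional state; if p(a|x)=0 this is the zero matrix (its terms carry weight p(a|x)=0).\<close>
definition cond_state :: "(nat \<Rightarrow> nat \<Rightarrow> qop) \<Rightarrow> nat \<Rightarrow> nat \<Rightarrow> qop" where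
  "cond_state \<rho> a x = (1 / prob \<rho> a x) *\<^sub>R \<rho> a x"

definition has_LHS :: "(nat \<Rightarrow> nat \<Rightarrow> qop) \<Rightarrow> bool" where
  "has_LHS \<rho> \<longleftrightarrow> (\<exists>(\<Lambda>::nat set) (P::nat \<Rightarrow> real) (pl::nat \<Rightarrow> nat \<Rightarrow> nat \<Rightarrow> real) (\<sigma>::nat \<Rightarrow> qop).
      finite \<Lambda> \<and> (\<forall>l\<in>\<Lambda>. P l \<ge> 0) \<and> sum P \<Lambda> = 1 \<and>
      (\<forall>l\<in>\<Lambda>. \<forall>x\<in>{1,2,3}. (\<forall>a\<in>{0,1}. pl a x l \<ge> 0) \<and> pl 0 x l + pl 1 x l = 1) \<and>
      (\<forall>l\<in>\<Lambda>. density (\<sigma> l)) \<and>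
      (\<forall>a\<in>{0,1}. \<forall>x\<in>{1,2,3}. \<rho> a x = (\<Sum>l\<in>\<Lambda>. (P l * pl a x l) *\<^sub>R \<sigma> l)))"

end

theory Submission
  imports Defs "HOL-Real_Asymp.Real_Asymp"
begin

lemma artanh_ge: assumes "0 \<le> x" "x < 1" shows "x \<le> artanh (x::real)"
proof -
  have "(\<lambda>u. artanh u - u) 0 \<le> (\<lambda>u. artanh u - u) x"
  proof (rule DERIV_nonneg_imp_increasing_open[OF assms(1)])
    fix u :: real assume u: "0 < u" "u < x"
    have "((\<lambda>u. artanh u - u) has_real_derivative (1/(1-u^2) - 1)) (at u)"
      using u assms by (auto intro!: derivative_eq_intros)
    moreover have "1/(1-u^2) - 1 \<ge> 0"
    proof -
      have "0 < 1 - u^2" "1 - u^2 \<le> 1" using u assms by (auto simp: abs_square_less_1)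
      then show ?thesis by (simp add: field_simps)
    qed
    ultimately show "\<exists>y. ((\<lambda>u. artanh u - u) has_real_derivative y) (at u) \<and> 0 \<le> y" by blast
  next
    show "continuous_on {0..x} (\<lambda>u. artanh u - u)" using assms by (intro continuous_intros) auto
  qed
  then show ?thesis by simp
qed

lemma artanh_le: assumes "0 \<le> x" "x < 1" shows "artanh (x::real) \<le> x / (1 - x^2)"
proof -
  have "(\<lambda>u. u/(1-u^2) - artanh u) 0 \<le> (\<lambda>u. u/(1-u^2) - artanh u) x"
  proof (rule DERIV_nonneg_imp_increasing_open[OF assms(1)])
    fix u :: real assume u: "0 < u" "u < x"
    have p: "0 < 1 - u^2" using u assms by (simp add: abs_square_less_1)
    have "((\<lambda>u. u/(1-u^2) - artanh u) has_real_derivative ((1*(1-u^2) - u*(-(2*u)))/(1-u^2)^2 - 1/(1-u^2))) (at u)"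
      using u assms p by (auto intro!: derivative_eq_intros simp: power2_eq_square)
    moreover have "(1*(1-u^2) - u*(-(2*u)))/(1-u^2)^2 - 1/(1-u^2) = 2*u^2/(1-u^2)^2"
    proof -
      define q where "q = 1 - u^2"
      have q: "q \<noteq> 0" using p q_def by simp
      have "(1*(1-u^2) - u*(-(2*u))) = 2 - q" unfolding q_def by (simp add: power2_eq_square)
      moreover have "2*u^2 = 2 - 2*q" unfolding q_def by simp
      ultimately show ?thesis using q unfolding q_def[symmetric] by (simp add: field_simps power2_eq_square)
    qed
    moreover have "2*u^2/(1-u^2)^2 \<ge> 0" by simp
    ultimately show "\<exists>y. ((\<lambda>u. u/(1-u^2) - artanh u) has_real_derivative y) (at u) \<and> 0 \<le> y" by metis
  next
    have "\<forall>u\<in>{0..x}. 1 - u^2 \<noteq> 0"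
    proof
      fix u assume "u \<in> {0..x}"
      then have "u^2 \<le> x^2" by (auto intro: power_mono)
      moreover have "x^2 < 1" using assms by (simp add: abs_square_less_1)
      ultimately show "1 - u^2 \<noteq> 0" by simp
    qed
    then show "continuous_on {0..x} (\<lambda>u. u/(1-u^2) - artanh u)" using assms by (intro continuous_intros) auto
  qed
  then show ?thesis by simp
qed

lemma sq_lt1: assumes "0 \<le> u" "u < (1::real)" shows "0 < 1 - u^2"
  using assms by (simp add: abs_square_less_1)

lemma artanh_ratio_mono: assumes "0 < x" "x \<le> y" "y < 1"
  shows "artanh x / x \<le> artanh (y::real) / y"
proof -
  have "(\<lambda>u. artanh u / u) x \<le> (\<lambda>u. artanh u / u) y"
  proof (rule DERIV_nonneg_imp_increasing_open[OF assms(2)])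
    fix u :: real assume u: "x < u" "u < y"
    have p: "0 < 1 - u^2" using u assms by (intro sq_lt1) auto
    have "((\<lambda>u. artanh u / u) has_real_derivative ((1/(1-u^2)) * u - artanh u * 1) / (u*u)) (at u)"
      using u assms p by (auto intro!: derivative_eq_intros)
    moreover have "((1/(1-u^2)) * u - artanh u * 1) / (u*u) \<ge> 0"
    proof -
      have "artanh u \<le> u / (1-u^2)" using u assms by (intro artanh_le) auto
      then have "0 \<le> (1/(1-u^2)) * u - artanh u * 1" by simp
      then show ?thesis by simp
    qed
    ultimately show "\<exists>d. ((\<lambda>u. artanh u / u) has_real_derivative d) (at u) \<and> 0 \<le> d" by blast
  next
    show "continuous_on {x..y} (\<lambda>u. artanh u / u)" using assms by (intro continuous_intros) auto
  qed
  then show ?thesis by simp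
qed

lemma phi_mono: assumes "0 < x" "x \<le> y" "y < 1"
  shows "artanh y * sqrt (1 - y^2) / y \<le> artanh x * sqrt (1 - x^2) / (x::real)"
proof -
  have "(\<lambda>u. artanh u * sqrt (1 - u^2) / u) x \<ge> (\<lambda>u. artanh u * sqrt (1 - u^2) / u) y"
  proof (rule DERIV_nonpos_imp_decreasing_open[OF assms(2)])
    fix u :: real assume u: "x < u" "u < y"
    have p: "0 < 1 - u^2" using u assms by (intro sq_lt1) auto
    define s where "s = sqrt (1 - u^2)"
    have s: "0 < s" "s^2 = 1 - u^2" using p unfolding s_def by auto
    define D where "D = ((1/(1-u^2)) * s + artanh u * (-(u) / s)) / u - artanh u * s / u^2"
    have "((\<lambda>u. artanh u * sqrt (1 - u^2) / u) has_real_derivative D) (at u)"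
      unfolding D_def s_def using u assms p
      by (auto intro!: derivative_eq_intros simp: field_simps power2_eq_square)
    moreover have "D \<le> 0"
    proof -
      have "artanh u \<ge> u" using u assms by (intro artanh_ge) auto
      have e: "1 - u^2 = s^2" using s by simp
      have "D = (u - artanh u * (u^2 + s^2)) / (s * u^2)"
        unfolding D_def e using s(1) u assms by (simp add: field_simps power2_eq_square)
      also have "u^2 + s^2 = 1" using s by simp
      finally have "D = (u - artanh u) / (s * u^2)" by simp
      also have "\<dots> \<le> 0" using \<open>artanh u \<ge> u\<close> s u assms
        by (intro divide_nonpos_pos) auto
      finally show ?thesis .
    qed
    ultimately show "\<exists>d. ((\<lambda>u. artanh u * sqrt (1 - u^2) / u) has_real_derivative d) (at u) \<and> d \<le> 0" by blast
  next
    have "\<forall>u\<in>{x..y}. u \<in> {-1<..<1}" using assms by auto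
    then show "continuous_on {x..y} (\<lambda>u. artanh u * sqrt (1 - u^2) / u)" using assms
      by (intro continuous_intros) auto
  qed
  then show ?thesis by simp
qed

lemma xlnx_cont: "continuous_on {0..} (\<lambda>p::real. p * ln p)"
proof (rule continuous_on_eq_continuous_within[THEN iffD2], intro ballI)
  fix p :: real assume "p \<in> {0..}"
  show "continuous (at p within {0..}) (\<lambda>p. p * ln p)"
  proof (cases "p = 0")
    case True
    have "((\<lambda>p::real. p * ln p) \<longlongrightarrow> 0) (at_right 0)" by real_asymp
    then show ?thesis using True by (simp add: continuous_within at_within_Ici_at_right)
  next
    case False
    then have "p > 0" using \<open>p \<in> {0..}\<close> by auto
    then have "isCont (\<lambda>p. p * ln p) p" by (intro isCont_mult isCont_ln continuous_ident) auto
    then show ?thesis by (rule continuous_at_imp_continuous_within)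
  qed
qed

definition xlnx :: "real \<Rightarrow> real" where "xlnx p = p * ln p"

lemma xlnx_deriv[derivative_intros]:
  assumes "(f has_real_derivative f') (at x within S)" "f x > 0"
  shows "((\<lambda>x. xlnx (f x)) has_real_derivative ((ln (f x) + 1) * f')) (at x within S)"
  unfolding xlnx_def using assms by (auto intro!: derivative_eq_intros simp: algebra_simps)

definition Hn :: "real \<Rightarrow> real" where
  "Hn s = - xlnx ((1+s)/2) - xlnx ((1-s)/2)"

lemma Hn_cont: "continuous_on {-1..1} Hn"
proof -
  have a: "continuous_on {-1..1} (\<lambda>s::real. ((1+s)/2) * ln ((1+s)/2))"
    by (rule continuous_on_compose2[OF xlnx_cont, of _ "\<lambda>s. (1+s)/2"]) (auto intro!: continuous_intros)
  have b: "continuous_on {-1..1} (\<lambda>s::real. ((1-s)/2) * ln ((1-s)/2))"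
    by (rule continuous_on_compose2[OF xlnx_cont, of _ "\<lambda>s. (1-s)/2"]) (auto intro!: continuous_intros)
  show ?thesis unfolding Hn_def[abs_def] xlnx_def by (intro continuous_intros a b)
qed

lemma Hn_deriv: assumes "-1 < s" "s < 1" shows "(Hn has_real_derivative (- artanh s)) (at s)"
proof -
  have p: "0 < (1+s)/2" "0 < (1-s)/2" using assms by auto
  have "(Hn has_real_derivative (- ((ln ((1+s)/2) + 1) * (1/2)) - ((ln ((1-s)/2) + 1) * (-1/2)))) (at s)"
    unfolding Hn_def[abs_def] using p by (auto intro!: derivative_eq_intros)
  moreover have "ln ((1+s)/(1-s)) = ln ((1+s)/2) - ln ((1-s)/2)"
  proof -
    have e: "(1+s)/(1-s) = ((1+s)/2) / ((1-s)/2)" using p by (simp add: field_simps)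
    show ?thesis by (subst e) (rule ln_divide_pos[OF p])
  qed
  then have "- artanh s = - ((ln ((1+s)/2) + 1) * (1/2)) - ((ln ((1-s)/2) + 1) * (-1/2))"
    unfolding artanh_def by (simp add: algebra_simps)
  ultimately show ?thesis by simp
qed

lemma Hn_0: "Hn 0 = ln 2" by (simp add: Hn_def xlnx_def ln_div)
lemma Hn_1: "Hn 1 = 0" by (simp add: Hn_def xlnx_def)
lemma Hn_even: "Hn (-s) = Hn s" by (simp add: Hn_def)

lemma single_cross:
  fixes f f' :: "real \<Rightarrow> real"
  assumes "a \<le> c" "c \<le> b" "continuous_on {a..b} f"
    and d: "\<And>x. a < x \<Longrightarrow> x < b \<Longrightarrow> (f has_real_derivative f' x) (at x)"
    and sc: "\<And>x y. a < x \<Longrightarrow> x < y \<Longrightarrow> y < b \<Longrightarrow> f' y \<ge> 0 \<Longrightarrow> f' x \<ge> 0"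
  shows "min (f a) (f b) \<le> f c"
proof (cases "\<exists>w. a < w \<and> w < c \<and> f' w < 0")
  case True
  then obtain w where w: "a < w" "w < c" "f' w < 0" by blast
  have "f c \<ge> f b"
  proof (rule DERIV_nonpos_imp_decreasing_open[OF assms(2)])
    fix x assume x: "c < x" "x < b"
    have "f' x < 0" using sc[of w x] w x by force
    then show "\<exists>y. (f has_real_derivative y) (at x) \<and> y \<le> 0" using d[of x] x w by force
  next
    show "continuous_on {c..b} f" by (rule continuous_on_subset[OF assms(3)]) (use assms in auto)
  qed
  then show ?thesis by simp
next
  case False
  have "f a \<le> f c"
  proof (rule DERIV_nonneg_imp_increasing_open[OF assms(1)])
    fix x assume x: "a < x" "x < c"
    then show "\<exists>y. (f has_real_derivative y) (at x) \<and> 0 \<le> y" using d[of x] False assms by force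
  next
    show "continuous_on {a..c} f" by (rule continuous_on_subset[OF assms(3)]) (use assms in auto)
  qed
  then show ?thesis by simp
qed

lemma Hn_mono: assumes "0 \<le> z" "z \<le> t" "t \<le> 1" shows "Hn t \<le> Hn z"
proof (rule DERIV_nonpos_imp_decreasing_open[OF assms(2)])
  fix u assume u: "z < u" "u < t"
  have "artanh u \<ge> u" using u assms by (intro artanh_ge) auto
  then show "\<exists>y. (Hn has_real_derivative y) (at u) \<and> y \<le> 0"
    using Hn_deriv[of u] u assms by (intro exI[of _ "- artanh u"]) auto
next
  show "continuous_on {z..t} Hn" by (rule continuous_on_subset[OF Hn_cont]) (use assms in auto)
qed

lemma sqrt1_deriv: assumes "0 < 1 - x^2"
  shows "((\<lambda>x. sqrt (1 - x^2)) has_real_derivative (- x / sqrt (1 - x^2))) (at (x::real))"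
  using assms by (auto intro!: derivative_eq_intros simp: field_simps)

lemma sqrtz_deriv: assumes "0 < x^2 - z^2"
  shows "((\<lambda>x. sqrt (x^2 - z^2)) has_real_derivative (x / sqrt (x^2 - z^2))) (at (x::real))"
  using assms by (auto intro!: derivative_eq_intros simp: field_simps)

lemma Hn_le_sqrt: assumes "0 \<le> x" "x \<le> 1" shows "Hn x \<le> ln 2 * sqrt (1 - x^2)"
proof -
  define f where "f = (\<lambda>x. ln 2 * sqrt (1 - x^2) - Hn x)"
  define f' where "f' = (\<lambda>x. ln 2 * (- x / sqrt (1 - x^2)) + artanh x)"
  have "min (f 0) (f 1) \<le> f x"
  proof (rule single_cross[of 0 x 1 f f'])
    show "continuous_on {0..1} f" unfolding f_def
      by (intro continuous_intros continuous_on_subset[OF Hn_cont]) auto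
  next
    fix u :: real assume u: "0 < u" "u < 1"
    have p: "0 < 1 - u^2" using u by (intro sq_lt1) auto
    have "(f has_real_derivative (ln 2 * (- u / sqrt (1 - u^2)) - (- artanh u))) (at u)"
      unfolding f_def by (intro DERIV_diff DERIV_cmult sqrt1_deriv[OF p] Hn_deriv) (use u in auto)
    then show "(f has_real_derivative f' u) (at u)" unfolding f'_def by simp
  next
    fix u v :: real assume uv: "0 < u" "u < v" "v < 1" "f' v \<ge> 0"
    have pu: "0 < sqrt (1 - u^2)" using sq_lt1[of u] uv by simp
    have pv: "0 < sqrt (1 - v^2)" using sq_lt1[of v] uv by simp
    have "ln 2 * v / sqrt (1 - v^2) \<le> artanh v" using uv(4) unfolding f'_def by simp
    then have "ln 2 * v \<le> artanh v * sqrt (1 - v^2)" using pv by (simp add: field_simps)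
    then have "ln 2 \<le> artanh v * sqrt (1 - v^2) / v" using uv by (simp add: field_simps)
    also have "\<dots> \<le> artanh u * sqrt (1 - u^2) / u" using uv by (intro phi_mono) auto
    finally have "ln 2 * u \<le> artanh u * sqrt (1 - u^2)" using uv by (simp add: field_simps)
    then have "ln 2 * u / sqrt (1 - u^2) \<le> artanh u" using pu by (simp add: field_simps)
    then show "f' u \<ge> 0" unfolding f'_def by simp
  qed (use assms in auto)
  moreover have "f 0 = 0" "f 1 = 0" unfolding f_def by (auto simp: Hn_0 Hn_1)
  ultimately show ?thesis unfolding f_def by simp
qed

lemma Hn_diff: assumes "0 \<le> z" "z \<le> t" "t \<le> 1" shows "Hn z - Hn t \<le> ln 2 * sqrt (t^2 - z^2)"
proof -
  define f where "f = (\<lambda>x. ln 2 * sqrt (x^2 - z^2) - Hn z + Hn x)"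
  define f' where "f' = (\<lambda>x. ln 2 * (x / sqrt (x^2 - z^2)) - artanh x)"
  have "min (f z) (f 1) \<le> f t"
  proof (rule single_cross[of z t 1 f f'])
    show "continuous_on {z..1} f" unfolding f_def using assms
      by (intro continuous_intros continuous_on_subset[OF Hn_cont]) auto
  next
    fix u :: real assume u: "z < u" "u < 1"
    have p: "0 < u^2 - z^2" using u assms by (simp add: power_strict_mono)
    have "(f has_real_derivative (ln 2 * (u / sqrt (u^2 - z^2)) - 0 + (- artanh u))) (at u)"
      unfolding f_def by (intro DERIV_add DERIV_diff DERIV_cmult sqrtz_deriv[OF p] Hn_deriv DERIV_const) (use u assms in auto)
    then show "(f has_real_derivative f' u) (at u)" unfolding f'_def by simp
  next
    fix u v :: real assume uv: "z < u" "u < v" "v < 1" "f' v \<ge> 0"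
    have pu: "0 < sqrt (u^2 - z^2)" using uv assms by (simp add: power_strict_mono)
    have pv: "0 < sqrt (v^2 - z^2)" using uv assms by (simp add: power_strict_mono)
    have le: "sqrt (u^2 - z^2) \<le> sqrt (v^2 - z^2)" using uv assms by (simp add: power_mono)
    have "artanh v \<le> ln 2 * (v / sqrt (v^2 - z^2))" using uv(4) unfolding f'_def by simp
    have "artanh u / u \<le> artanh v / v" using uv assms by (intro artanh_ratio_mono) auto
    then have "artanh u \<le> u * (artanh v / v)" using uv assms by (simp add: field_simps)
    also have "\<dots> \<le> u * (ln 2 / sqrt (v^2 - z^2))"
      using \<open>artanh v \<le> _\<close> uv assms by (intro mult_left_mono) (auto simp: field_simps)
    also have "\<dots> \<le> u * (ln 2 / sqrt (u^2 - z^2))"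
      using uv assms pu pv le by (intro mult_left_mono divide_left_mono) auto
    finally show "f' u \<ge> 0" unfolding f'_def by (simp add: mult.commute)
  qed (use assms in auto)
  moreover have "f z = 0" unfolding f_def by simp
  moreover have "f 1 \<ge> 0" unfolding f_def using Hn_le_sqrt[of z] assms by (simp add: Hn_1)
  ultimately show ?thesis unfolding f_def by simp
qed


lemma mk_vec_1[simp]: "mk_vec a b $ 1 = a" and mk_vec_2[simp]: "mk_vec a b $ 2 = b"
  by (simp_all add: mk_vec_def)

lemma mk_mat_11[simp]: "mk_mat a b c d $ 1 $ 1 = a" and mk_mat_12[simp]: "mk_mat a b c d $ 1 $ 2 = b"
  and mk_mat_21[simp]: "mk_mat a b c d $ 2 $ 1 = c" and mk_mat_22[simp]: "mk_mat a b c d $ 2 $ 2 = d"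
  by (simp_all add: mk_mat_def)

lemma braket_expand: "braket u A v = cnj (u$1) * (A$1$1 * v$1 + A$1$2 * v$2) + cnj (u$2) * (A$2$1 * v$1 + A$2$2 * v$2)"
  by (simp add: braket_def sum_2 matrix_vector_mult_def)

lemma s2: "complex_of_real (sqrt 2) * complex_of_real (sqrt 2) = 2"
  by (simp flip: of_real_mult)

lemma s2': "complex_of_real (sqrt 2) \<noteq> 0" by simp

lemma bk1: "braket (ebasis 1 0) A (ebasis 1 1) = (A$1$1 - A$1$2 + A$2$1 - A$2$2)/2"
  "braket (ebasis 1 1) A (ebasis 1 0) = (A$1$1 + A$1$2 - A$2$1 - A$2$2)/2"
  "braket (ebasis 1 0) A (ebasis 1 0) = (A$1$1 + A$1$2 + A$2$1 + A$2$2)/2"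
  "braket (ebasis 1 1) A (ebasis 1 1) = (A$1$1 - A$1$2 - A$2$1 + A$2$2)/2"
  by (simp_all add: braket_expand ebasis_def field_simps s2)

lemma bk2: "braket (ebasis 2 0) A (ebasis 2 1) = (A$1$1 - \<i>*A$1$2 - \<i>*A$2$1 - A$2$2)/2"
  "braket (ebasis 2 1) A (ebasis 2 0) = (A$1$1 + \<i>*A$1$2 + \<i>*A$2$1 - A$2$2)/2"
  "braket (ebasis 2 0) A (ebasis 2 0) = (A$1$1 + \<i>*A$1$2 - \<i>*A$2$1 + A$2$2)/2"
  "braket (ebasis 2 1) A (ebasis 2 1) = (A$1$1 - \<i>*A$1$2 + \<i>*A$2$1 + A$2$2)/2"
  by (simp_all add: braket_expand ebasis_def field_simps s2)

lemma bk3: "k \<noteq> 1 \<Longrightarrow> k \<noteq> 2 \<Longrightarrow> braket (ebasis k 0) A (ebasis k 1) = A$1$2"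
  "k \<noteq> 1 \<Longrightarrow> k \<noteq> 2 \<Longrightarrow> braket (ebasis k 1) A (ebasis k 0) = A$2$1"
  "k \<noteq> 1 \<Longrightarrow> k \<noteq> 2 \<Longrightarrow> braket (ebasis k 0) A (ebasis k 0) = A$1$1"
  "k \<noteq> 1 \<Longrightarrow> k \<noteq> 2 \<Longrightarrow> braket (ebasis k 1) A (ebasis k 1) = A$2$2"
  by (simp_all add: braket_expand ebasis_def)

lemma trace2: "trace (A::qop) = A$1$1 + A$2$2"
  by (simp add: trace_def sum_2)

lemma eta_alt: "eta x = - xlnx x / ln 2"
  by (simp add: eta_def xlnx_def log_def)

lemma vN_eval:
  assumes tr: "trace A = 1" and dt: "det A = complex_of_real ((1 - s^2)/4)"
  shows "vN_entropy A = Hn s / ln 2"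
proof -
  define P where "P = (\<lambda>(l1::complex, l2::complex). \<forall>z. det (mat z - A) = (z - l1) * (z - l2))"
  have detz: "det (mat z - A) = z*z - z + complex_of_real ((1 - s^2)/4)" for z
  proof -
    have "det (mat z - A) = (z - A$1$1) * (z - A$2$2) - A$1$2 * A$2$1"
      by (simp add: det_2 mat_def)
    also have "\<dots> = z*z - z * (A$1$1 + A$2$2) + (A$1$1 * A$2$2 - A$1$2 * A$2$1)"
      by (simp add: algebra_simps)
    also have "\<dots> = z*z - z + complex_of_real ((1 - s^2)/4)"
      using tr dt by (simp add: trace2 det_2)
    finally show ?thesis .
  qed
  have "P (complex_of_real ((1+s)/2), complex_of_real ((1-s)/2))"
  proof -
    have a: "complex_of_real ((1+s)/2) + complex_of_real ((1-s)/2) = 1"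
      by (simp add: field_simps)
    have b: "complex_of_real ((1+s)/2) * complex_of_real ((1-s)/2) = complex_of_real ((1 - s^2)/4)"
    proof -
      have "(1+s)/2 * ((1-s)/2) = (1 - s^2)/4" by (simp add: field_simps power2_eq_square)
      then show ?thesis by (metis of_real_mult)
    qed
    show ?thesis unfolding P_def
    proof (clarify)
      fix z
      have "(z - complex_of_real ((1+s)/2)) * (z - complex_of_real ((1-s)/2))
          = z*z - z * (complex_of_real ((1+s)/2) + complex_of_real ((1-s)/2)) + complex_of_real ((1+s)/2) * complex_of_real ((1-s)/2)"
        by (simp add: algebra_simps)
      then show "det (mat z - A) = (z - complex_of_real ((1+s)/2)) * (z - complex_of_real ((1-s)/2))"
        using a b detz by simp
    qed
  qed
  then have "P (eigvals A)" unfolding eigvals_def P_def[symmetric] by (rule someI)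
  then obtain l1 l2 where e: "eigvals A = (l1, l2)" and pl: "\<forall>z. det (mat z - A) = (z - l1) * (z - l2)"
    unfolding P_def by (cases "eigvals A") auto
  have h0: "l1 * l2 = complex_of_real ((1 - s^2)/4)" using pl[rule_format, of 0] detz[of 0] by simp
  have h1: "(1 - l1) * (1 - l2) = complex_of_real ((1 - s^2)/4)" using pl[rule_format, of 1] detz[of 1] by simp
  have "(1 - l1) * (1 - l2) = l1 * l2" using h0 h1 by (simp only:)
  then have "1 - l1 - l2 = 0" by (simp add: algebra_simps)
  then have sum: "l2 = 1 - l1" by (simp add: algebra_simps)
  have "(l1 - complex_of_real ((1+s)/2)) * (l1 - complex_of_real ((1-s)/2)) = 0"
  proof -
    have a: "complex_of_real ((1+s)/2) + complex_of_real ((1-s)/2) = 1"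
      by (simp add: field_simps)
    have b: "complex_of_real ((1+s)/2) * complex_of_real ((1-s)/2) = complex_of_real ((1 - s^2)/4)"
    proof -
      have "(1+s)/2 * ((1-s)/2) = (1 - s^2)/4" by (simp add: field_simps power2_eq_square)
      then show ?thesis by (metis of_real_mult)
    qed
    have "(l1 - complex_of_real ((1+s)/2)) * (l1 - complex_of_real ((1-s)/2))
       = l1*l1 - l1 * (complex_of_real ((1+s)/2) + complex_of_real ((1-s)/2)) + complex_of_real ((1+s)/2) * complex_of_real ((1-s)/2)"
      by (simp add: algebra_simps)
    then have "(l1 - complex_of_real ((1+s)/2)) * (l1 - complex_of_real ((1-s)/2)) = l1*l1 - l1 + complex_of_real ((1 - s^2)/4)"
      using a b by simp
    also have "\<dots> = 0"
    proof -
      have "complex_of_real ((1 - s^2)/4) = l1 * (1 - l1)" using h0 sum by (simp only:)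
      then show ?thesis by (simp add: algebra_simps)
    qed
    finally show ?thesis .
  qed
  then have "l1 = complex_of_real ((1+s)/2) \<or> l1 = complex_of_real ((1-s)/2)" by simp
  moreover have "Re l2 = 1 - Re l1" using sum by simp
  moreover have "1 - (1+s)/2 = (1-s)/2" "1 - (1-s)/2 = (1+s)/2" by (simp_all add: field_simps)
  ultimately have "(Re l1 = (1+s)/2 \<and> Re l2 = (1-s)/2) \<or> (Re l1 = (1-s)/2 \<and> Re l2 = (1+s)/2)"
    by (metis Re_complex_of_real)
  then have "eta (Re l1) + eta (Re l2) = eta ((1+s)/2) + eta ((1-s)/2)"
    by (metis add.commute)
  then show ?thesis using e by (simp add: vN_entropy_def eta_alt Hn_def diff_divide_distrib add_divide_distrib)
qed

lemma psd_facts: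
  assumes "psd A"
  shows "Im (A$1$1) = 0" "Re (A$1$1) \<ge> 0" "Im (A$2$2) = 0" "Re (A$2$2) \<ge> 0"
    "A$2$1 = cnj (A$1$2)"
    "Re (A$1$1) * (Re (A$1$1) * Re (A$2$2) - (cmod (A$1$2))^2) \<ge> 0"
    "Re (A$2$2) * (Re (A$1$1) * Re (A$2$2) - (cmod (A$1$2))^2) \<ge> 0"
proof -
  have P: "Im (braket v A v) = 0 \<and> Re (braket v A v) \<ge> 0" for v using assms unfolding psd_def by blast
  define a b c d where "a = A$1$1" "b = A$1$2" "c = A$2$1" "d = A$2$2"
  have v1: "braket (mk_vec 1 0) A (mk_vec 1 0) = a" by (simp add: braket_expand a_b_c_d_def)
  have v2: "braket (mk_vec 0 1) A (mk_vec 0 1) = d" by (simp add: braket_expand a_b_c_d_def)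
  have v3: "braket (mk_vec 1 1) A (mk_vec 1 1) = a + b + c + d" by (simp add: braket_expand a_b_c_d_def)
  have v4: "braket (mk_vec 1 \<i>) A (mk_vec 1 \<i>) = a + \<i>*b - \<i>*c + d" by (simp add: braket_expand a_b_c_d_def algebra_simps)
  show ia: "Im (A$1$1) = 0" and ra: "Re (A$1$1) \<ge> 0" using P[of "mk_vec 1 0"] v1 a_b_c_d_def by auto
  show id: "Im (A$2$2) = 0" and rd: "Re (A$2$2) \<ge> 0" using P[of "mk_vec 0 1"] v2 a_b_c_d_def by auto
  have "Im b + Im c = 0" using P[of "mk_vec 1 1"] v3 ia id a_b_c_d_def by simp
  moreover have "Re b - Re c = 0" using P[of "mk_vec 1 \<i>"] v4 ia id a_b_c_d_def by simp
  ultimately have cb: "c = cnj b" by (simp add: complex_eq_iff)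
  then show "A$2$1 = cnj (A$1$2)" using a_b_c_d_def by simp
  have ar: "a = complex_of_real (Re a)" using ia a_b_c_d_def by (simp add: complex_eq_iff)
  have dr: "d = complex_of_real (Re d)" using id a_b_c_d_def by (simp add: complex_eq_iff)
  have bb: "cnj b * b = complex_of_real ((cmod b)^2)" by (simp add: complex_mult_cnj cmod_power2 mult.commute)
  have v5: "braket (mk_vec (-b) a) A (mk_vec (-b) a) = a * (a * d - cnj b * b)"
  proof -
    have ca: "cnj a = a" using ia a_b_c_d_def by (simp add: complex_eq_iff)
    show ?thesis by (simp add: braket_expand a_b_c_d_def[symmetric] cb ca algebra_simps)
  qed
  have v6: "braket (mk_vec d (-c)) A (mk_vec d (-c)) = d * (a * d - cnj b * b)"
  proof -
    have cd: "cnj d = d" using id a_b_c_d_def by (simp add: complex_eq_iff)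
    show ?thesis by (simp add: braket_expand a_b_c_d_def[symmetric] cb cd algebra_simps)
  qed
  obtain ra rd where rr: "a = complex_of_real ra" "d = complex_of_real rd" using ar dr by blast
  have e: "a * (a * d - cnj b * b) = complex_of_real (Re a * (Re a * Re d - (cmod b)^2))"
    unfolding bb rr by simp
  have e2: "d * (a * d - cnj b * b) = complex_of_real (Re d * (Re a * Re d - (cmod b)^2))"
    unfolding bb rr by simp
  show "Re (A$1$1) * (Re (A$1$1) * Re (A$2$2) - (cmod (A$1$2))^2) \<ge> 0"
    using P[of "mk_vec (-b) a"] v5 e a_b_c_d_def by simp
  show "Re (A$2$2) * (Re (A$1$1) * Re (A$2$2) - (cmod (A$1$2))^2) \<ge> 0"
    using P[of "mk_vec d (-c)"] v6 e2 a_b_c_d_def by simp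
qed

lemma pairset: "{(m,n). m \<in> {0,1::nat} \<and> n \<in> {0,1::nat} \<and> m \<noteq> n} = {(0,1),(1,0)}"
  by auto

lemma Cl_def2: "coherence L1 k A = cmod (braket (ebasis k 0) A (ebasis k 1)) + cmod (braket (ebasis k 1) A (ebasis k 0))"
  unfolding coherence_def coh.case pairset by simp

lemma density_param:
  assumes "density A"
  obtains a d x y where "A$1$1 = complex_of_real a" "A$2$2 = complex_of_real d"
    "A$1$2 = Complex x y" "A$2$1 = Complex x (-y)" "0 \<le> a" "0 \<le> d" "a + d = 1" "x^2 + y^2 \<le> a * d"
proof -
  have p: "psd A" and t: "trace A = 1" using assms by (auto simp: density_def)
  note f = psd_facts[OF p]
  define a d x y where "a = Re (A$1$1)" "d = Re (A$2$2)" "x = Re (A$1$2)" "y = Im (A$1$2)"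
  have 1: "A$1$1 = complex_of_real a" "A$2$2 = complex_of_real d" using f(1,3) a_d_x_y_def by (auto simp: complex_eq_iff)
  have 2: "A$1$2 = Complex x y" "A$2$1 = Complex x (-y)" using f(5) a_d_x_y_def by (auto simp: complex_eq_iff)
  have s: "a + d = 1" using t 1 by (simp add: trace2 flip: of_real_add)
  have c: "(cmod (A$1$2))^2 = x^2 + y^2" using 2 by (simp add: cmod_power2)
  have "(a + d) * (a * d - (x^2 + y^2)) \<ge> 0" using f(6,7) a_d_x_y_def c by (simp add: distrib_right)
  then have xy: "x^2 + y^2 \<le> a * d" using s by simp
  have nn: "0 \<le> a" "0 \<le> d" using f(2,4) unfolding a_d_x_y_def by auto
  show ?thesis by (rule that[OF 1 2 nn s xy])
qed

lemma sqrt_two_mult: "2 * sqrt u = sqrt (4 * u)"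
  by (simp add: real_sqrt_mult)

lemma Cl_vals:
  assumes "A$1$1 = complex_of_real a" "A$2$2 = complex_of_real d" "A$1$2 = Complex x y" "A$2$1 = Complex x (-y)"
  shows "coherence L1 1 A = sqrt ((a-d)^2 + 4*y^2)"
    "coherence L1 2 A = sqrt ((a-d)^2 + 4*x^2)"
    "k \<noteq> 1 \<Longrightarrow> k \<noteq> 2 \<Longrightarrow> coherence L1 k A = sqrt (4*x^2 + 4*y^2)"
proof -
  have "braket (ebasis 1 0) A (ebasis 1 1) = Complex ((a-d)/2) (-y)"
    "braket (ebasis 1 1) A (ebasis 1 0) = Complex ((a-d)/2) y"
    unfolding bk1 using assms by (simp_all add: complex_eq_iff)
  then have "coherence L1 1 A = 2 * sqrt (((a-d)/2)^2 + y^2)" by (simp add: Cl_def2 complex_norm)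
  also have "\<dots> = sqrt ((a-d)^2 + 4*y^2)" by (simp add: sqrt_two_mult field_simps power2_eq_square)
  finally show "coherence L1 1 A = sqrt ((a-d)^2 + 4*y^2)" .
  have "braket (ebasis 2 0) A (ebasis 2 1) = Complex ((a-d)/2) (-x)"
    "braket (ebasis 2 1) A (ebasis 2 0) = Complex ((a-d)/2) x"
    unfolding bk2 using assms by (simp_all add: complex_eq_iff)
  then have "coherence L1 2 A = 2 * sqrt (((a-d)/2)^2 + x^2)" by (simp add: Cl_def2 complex_norm)
  also have "\<dots> = sqrt ((a-d)^2 + 4*x^2)" by (simp add: sqrt_two_mult field_simps power2_eq_square)
  finally show "coherence L1 2 A = sqrt ((a-d)^2 + 4*x^2)" .
  assume k: "k \<noteq> 1" "k \<noteq> 2"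
  have "coherence L1 k A = 2 * sqrt (x^2 + y^2)" unfolding Cl_def2 bk3[OF k] using assms by (simp add: complex_norm)
  also have "\<dots> = sqrt (4*x^2 + 4*y^2)" by (simp add: sqrt_two_mult field_simps)
  finally show "coherence L1 k A = sqrt (4*x^2 + 4*y^2)" .
qed

lemma dephase_entries: "dephase k A $ i $ j = braket (ebasis k 0) A (ebasis k 0) * (ebasis k 0 $ i * cnj (ebasis k 0 $ j))
   + braket (ebasis k 1) A (ebasis k 1) * (ebasis k 1 $ i * cnj (ebasis k 1 $ j))"
  by (simp add: dephase_def cscale_def outer_def)

lemma dephase_td:
  fixes A :: qop and k :: nat
  defines "p0 \<equiv> braket (ebasis k 0) A (ebasis k 0)" and "p1 \<equiv> braket (ebasis k 1) A (ebasis k 1)"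
  shows "trace (dephase k A) = p0 + p1" "det (dephase k A) = p0 * p1"
proof -
  have "(trace (dephase k A) = p0 + p1 \<and> det (dephase k A) = p0 * p1)"
  proof (cases "k = 1")
    case True
    then show ?thesis unfolding trace2 det_2 dephase_entries p0_def[symmetric] p1_def[symmetric]
      by (simp add: ebasis_def field_simps s2)
  next
    case F1: False
    show ?thesis
    proof (cases "k = 2")
      case True
      then show ?thesis unfolding trace2 det_2 dephase_entries p0_def[symmetric] p1_def[symmetric]
        by (simp add: ebasis_def field_simps s2)
    next
      case False
      then show ?thesis using F1 unfolding trace2 det_2 dephase_entries p0_def[symmetric] p1_def[symmetric]
        by (simp add: ebasis_def)
    qed
  qed
  then show "trace (dephase k A) = p0 + p1" "det (dephase k A) = p0 * p1" by auto
qed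

lemma key_real:
  assumes "0 \<le> t" "t \<le> 1" "s^2 \<le> t^2"
  shows "0 \<le> (Hn s - Hn t) / ln 2" "(Hn s - Hn t) / ln 2 \<le> sqrt (t^2 - s^2)"
proof -
  have st: "\<bar>s\<bar> \<le> t" using assms by (metis abs_le_square_iff abs_of_nonneg)
  have hs: "Hn s = Hn \<bar>s\<bar>" by (cases "s \<ge> 0") (auto simp: Hn_even)
  have "Hn t \<le> Hn \<bar>s\<bar>" using st assms by (intro Hn_mono) auto
  then show "0 \<le> (Hn s - Hn t) / ln 2" using hs by simp
  have "Hn \<bar>s\<bar> - Hn t \<le> ln 2 * sqrt (t^2 - \<bar>s\<bar>^2)" using st assms by (intro Hn_diff) auto
  then show "(Hn s - Hn t) / ln 2 \<le> sqrt (t^2 - s^2)" using hs by (simp add: field_simps)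
qed

lemma pp_real:
  assumes "p0 = complex_of_real ((1+s)/2)" "p1 = complex_of_real ((1-s)/2)"
  shows "p0 + p1 = 1" "p0 * p1 = complex_of_real ((1 - s^2)/4)"
proof -
  have "(1+s)/2 + (1-s)/2 = (1::real)" by (simp add: field_simps)
  then show "p0 + p1 = 1" using assms by (metis of_real_add of_real_1)
  have "(1+s)/2 * ((1-s)/2) = (1 - s^2)/4" by (simp add: field_simps power2_eq_square)
  then show "p0 * p1 = complex_of_real ((1 - s^2)/4)" using assms by (metis of_real_mult)
qed

lemma density_coh:
  assumes "density A"
  obtains s t where "0 \<le> t" "t \<le> 1" "s^2 \<le> t^2"
    "coherence Rel k A = (Hn s - Hn t) / ln 2" "coherence L1 k A = sqrt (t^2 - s^2)"
proof -
  obtain a d x y where e: "A$1$1 = complex_of_real a" "A$2$2 = complex_of_real d"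
    "A$1$2 = Complex x y" "A$2$1 = Complex x (-y)" and nn: "0 \<le> a" "0 \<le> d" and ad: "a + d = 1"
    and xy: "x^2 + y^2 \<le> a * d"
    using density_param[OF assms] by metis
  define T where "T = (a-d)^2 + 4*x^2 + 4*y^2"
  define t where "t = sqrt T"
  have T1: "T \<le> 1"
  proof -
    have "(a-d)^2 + 4*(a*d) = (a+d)^2" by (simp add: power2_eq_square algebra_simps)
    then show ?thesis using xy ad unfolding T_def by simp
  qed
  have T0: "0 \<le> T" unfolding T_def by simp
  have tT: "t^2 = T" unfolding t_def using T0 by simp
  have t01: "0 \<le> t" "t \<le> 1" unfolding t_def using T0 T1 by auto
  have trA: "trace A = 1" using assms by (simp add: density_def)
  have detA: "det A = complex_of_real ((1 - t^2)/4)"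
  proof -
    have "det A = complex_of_real (a*d - (x^2 + y^2))"
      unfolding det_2 e by (simp add: complex_eq_iff power2_eq_square)
    also have "a*d - (x^2 + y^2) = (1 - t^2)/4"
    proof -
      have "(a-d)^2 + 4*(a*d) = (a+d)^2" by (simp add: power2_eq_square algebra_simps)
      then show ?thesis using ad tT unfolding T_def by (simp add: field_simps)
    qed
    finally show ?thesis .
  qed
  have vA: "vN_entropy A = Hn t / ln 2" by (rule vN_eval[OF trA detA])
  define s where "s = (if k = 1 then 2*x else if k = 2 then -2*y else a - d)"
  have p: "braket (ebasis k 0) A (ebasis k 0) = complex_of_real ((1+s)/2) \<and>
           braket (ebasis k 1) A (ebasis k 1) = complex_of_real ((1-s)/2)"
  proof (cases "k = 1")
    case True then show ?thesis unfolding s_def True bk1 using e ad by (simp add: complex_eq_iff field_simps)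
  next
    case F: False
    show ?thesis
    proof (cases "k = 2")
      case True then show ?thesis unfolding s_def True bk2 using e ad by (simp add: complex_eq_iff field_simps)
    next
      case False
      have "d = 1 - a" using ad by simp
      then show ?thesis unfolding s_def bk3[OF F False] using e F False by (simp add: complex_eq_iff field_simps)
    qed
  qed
  note pr = pp_real[OF conjunct1[OF p] conjunct2[OF p]]
  have vD: "vN_entropy (dephase k A) = Hn s / ln 2"
    by (rule vN_eval; unfold dephase_td; rule pr)
  have rel: "coherence Rel k A = (Hn s - Hn t) / ln 2"
    by (simp add: coherence_def vA vD diff_divide_distrib)
  have l1: "coherence L1 k A = sqrt (t^2 - s^2)"
  proof -
    note cv = Cl_vals[OF e]
    show ?thesis
    proof (cases "k = 1")
      case True then show ?thesis using cv(1) unfolding s_def tT T_def by (simp add: algebra_simps)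
    next
      case F: False
      show ?thesis
      proof (cases "k = 2")
        case True then show ?thesis using cv(2) unfolding s_def tT T_def by (simp add: algebra_simps)
      next
        case False then show ?thesis using cv(3)[OF F False] F unfolding s_def tT T_def by (simp add: algebra_simps)
      qed
    qed
  qed
  have "s^2 \<le> t^2"
  proof -
    have "0 \<le> t^2 - s^2"
    proof -
      have "t^2 - s^2 \<ge> 0" unfolding tT T_def s_def by (auto simp: power2_eq_square)
      then show ?thesis by simp
    qed
    then show ?thesis by simp
  qed
  then show ?thesis using that t01 rel l1 by blast
qed

lemma braket_add: "braket u (A + B) v = braket u A v + braket u B v"
  by (simp add: braket_expand algebra_simps)

lemma braket_zero: "braket u 0 v = 0"
  by (simp add: braket_expand)

lemma braket_scaleR: "braket u (c *\<^sub>R A) v = complex_of_real c * braket u A v"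
  by (simp add: braket_expand vector_scaleR_component) (simp add: scaleR_conv_of_real algebra_simps)

lemma braket_sum: "braket u (sum f S) v = (\<Sum>l\<in>S. braket u (f l) v)"
  by (induction S rule: infinite_finite_induct) (auto simp: braket_add braket_zero)

lemma Cl_nonneg: "0 \<le> coherence L1 k A"
  by (simp add: Cl_def2)

lemma Cl_scaleR: "coherence L1 k (c *\<^sub>R A) = \<bar>c\<bar> * coherence L1 k A"
  by (simp add: Cl_def2 braket_scaleR norm_mult algebra_simps)

lemma Cl_sum: "coherence L1 k (sum f S) \<le> (\<Sum>l\<in>S. coherence L1 k (f l))"
proof -
  have "coherence L1 k (sum f S) = cmod (\<Sum>l\<in>S. braket (ebasis k 0) (f l) (ebasis k 1)) + cmod (\<Sum>l\<in>S. braket (ebasis k 1) (f l) (ebasis k 0))"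
    by (simp add: Cl_def2 braket_sum)
  also have "\<dots> \<le> (\<Sum>l\<in>S. cmod (braket (ebasis k 0) (f l) (ebasis k 1))) + (\<Sum>l\<in>S. cmod (braket (ebasis k 1) (f l) (ebasis k 0)))"
    by (intro add_mono norm_sum)
  also have "\<dots> = (\<Sum>l\<in>S. coherence L1 k (f l))"
    by (simp add: Cl_def2 sum.distrib)
  finally show ?thesis .
qed

lemma coh_bounds:
  assumes "density A"
  shows "0 \<le> coherence \<alpha> k A" "coherence \<alpha> k A \<le> coherence L1 k A"
proof -
  obtain s t where st: "0 \<le> t" "t \<le> 1" "s^2 \<le> t^2"
    "coherence Rel k A = (Hn s - Hn t) / ln 2" "coherence L1 k A = sqrt (t^2 - s^2)"
    using density_coh[OF assms] by metis
  have "0 \<le> coherence \<alpha> k A \<and> coherence \<alpha> k A \<le> coherence L1 k A"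
  proof (cases \<alpha>)
    case L1 then show ?thesis by (simp add: Cl_nonneg)
  next
    case Rel then show ?thesis using key_real[OF st(1-3)] st(4,5) by simp
  qed
  then show "0 \<le> coherence \<alpha> k A" "coherence \<alpha> k A \<le> coherence L1 k A" by auto
qed

lemma Cl_sq_sum:
  assumes "density A"
  shows "(coherence L1 1 A)^2 + (coherence L1 2 A)^2 + (coherence L1 3 A)^2 \<le> 2"
proof -
  obtain a d x y where e: "A$1$1 = complex_of_real a" "A$2$2 = complex_of_real d"
    "A$1$2 = Complex x y" "A$2$1 = Complex x (-y)" and nn: "0 \<le> a" "0 \<le> d" and ad: "a + d = 1"
    and xy: "x^2 + y^2 \<le> a * d"
    using density_param[OF assms] by metis
  note cv = Cl_vals[OF e]
  have c3: "coherence L1 3 A = sqrt (4*x^2 + 4*y^2)" using cv(3)[of 3] by simp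
  have "(a-d)^2 + 4*(a*d) = (a+d)^2" by (simp add: power2_eq_square algebra_simps)
  then have T1: "(a-d)^2 + 4*x^2 + 4*y^2 \<le> 1" using xy ad by simp
  have "(coherence L1 1 A)^2 + (coherence L1 2 A)^2 + (coherence L1 3 A)^2
      = ((a-d)^2 + 4*y^2) + ((a-d)^2 + 4*x^2) + (4*x^2 + 4*y^2)"
    unfolding cv(1) cv(2) c3 by simp
  also have "\<dots> \<le> 2" using T1 by simp
  finally show ?thesis .
qed

lemma psd_scaleR: "psd A \<Longrightarrow> 0 \<le> c \<Longrightarrow> psd (c *\<^sub>R A)"
  by (simp add: psd_def braket_scaleR)

lemma trace_scaleR: "trace (c *\<^sub>R (A::qop)) = complex_of_real c * trace A"
  by (simp add: trace2 vector_scaleR_component) (simp add: scaleR_conv_of_real algebra_simps)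

lemma psd_trace: assumes "psd A" shows "trace A = complex_of_real (Re (trace A))" "Re (trace A) \<ge> 0"
  using psd_facts[OF assms] by (auto simp: trace2 complex_eq_iff)

lemma cond_density: assumes "psd (\<rho> a x)" "prob \<rho> a x > 0" shows "density (cond_state \<rho> a x)"
proof -
  have "psd (cond_state \<rho> a x)" unfolding cond_state_def using assms by (intro psd_scaleR) auto
  moreover have "trace (cond_state \<rho> a x) = 1"
  proof -
    have "trace (cond_state \<rho> a x) = complex_of_real (1 / prob \<rho> a x) * complex_of_real (prob \<rho> a x)"
      unfolding cond_state_def trace_scaleR prob_def using psd_trace(1)[OF assms(1)] by simp
    also have "\<dots> = complex_of_real (1 / prob \<rho> a x * prob \<rho> a x)" by simp
    also have "1 / prob \<rho> a x * prob \<rho> a x = 1" using assms(2) by simp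
    finally show ?thesis by simp
  qed
  ultimately show ?thesis by (simp add: density_def)
qed

lemma X_bounds:
  assumes "psd (\<rho> a x)"
  shows "0 \<le> prob \<rho> a x * coherence \<alpha> k (cond_state \<rho> a x)"
    "prob \<rho> a x * coherence \<alpha> k (cond_state \<rho> a x) \<le> coherence L1 k (\<rho> a x)"
proof -
  have p0: "prob \<rho> a x \<ge> 0" unfolding prob_def using psd_trace(2)[OF assms] .
  have "0 \<le> prob \<rho> a x * coherence \<alpha> k (cond_state \<rho> a x) \<and>
    prob \<rho> a x * coherence \<alpha> k (cond_state \<rho> a x) \<le> coherence L1 k (\<rho> a x)"
  proof (cases "prob \<rho> a x = 0")
    case True then show ?thesis by (simp add: Cl_nonneg)
  next
    case False
    then have pp: "prob \<rho> a x > 0" using p0 by simp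
    note d = cond_density[OF assms pp]
    note cb = coh_bounds[OF d, of \<alpha> k]
    have "prob \<rho> a x * coherence \<alpha> k (cond_state \<rho> a x) \<le> prob \<rho> a x * coherence L1 k (cond_state \<rho> a x)"
      using cb p0 by (intro mult_left_mono) auto
    also have "\<dots> = coherence L1 k (\<rho> a x)"
      unfolding cond_state_def Cl_scaleR using pp by simp
    finally show ?thesis using cb p0 by simp
  qed
  then show "0 \<le> prob \<rho> a x * coherence \<alpha> k (cond_state \<rho> a x)"
    "prob \<rho> a x * coherence \<alpha> k (cond_state \<rho> a x) \<le> coherence L1 k (\<rho> a x)" by auto
qed


lemma jensen_sq:
  fixes P f :: "nat \<Rightarrow> real"
  assumes "\<forall>l\<in>L. P l \<ge> 0" "sum P L = 1"
  shows "(\<Sum>l\<in>L. P l * f l)^2 \<le> (\<Sum>l\<in>L. P l * (f l)^2)"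
proof -
  define m where "m = (\<Sum>l\<in>L. P l * f l)"
  have "0 \<le> (\<Sum>l\<in>L. P l * (f l - m)^2)" using assms by (intro sum_nonneg) auto
  also have "\<dots> = (\<Sum>l\<in>L. P l * (f l)^2 - 2 * m * (P l * f l) + m^2 * P l)"
    by (rule sum.cong) (auto simp: power2_eq_square algebra_simps)
  also have "\<dots> = (\<Sum>l\<in>L. P l * (f l)^2) - 2 * m * m + m^2 * sum P L"
    by (simp add: sum.distrib sum_subtractf sum_distrib_left[symmetric] m_def)
  also have "\<dots> = (\<Sum>l\<in>L. P l * (f l)^2) - m^2" using assms(2) by (simp add: power2_eq_square)
  finally show ?thesis unfolding m_def by simp
qed

lemma triples: "{(i,j,k). i \<in> {1,2,3::nat} \<and> j \<in> {1,2,3} \<and> k \<in> {1,2,3} \<and> i \<noteq> j \<and> j \<noteq> k \<and> i \<noteq> k}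
  = {(1,2,3),(1,3,2),(2,1,3),(2,3,1),(3,1,2),(3,2,1)}"
  by auto

theorem proposition1:
  fixes \<alpha> :: coh and \<rho> :: "nat \<Rightarrow> nat \<Rightarrow> qop"
  assumes "assemblage \<rho>" and "has_LHS \<rho>"
  shows "(\<Sum>a\<in>{0,1::nat}. \<Sum>b\<in>{0,1::nat}.
            \<Sum>(i,j,k)\<in>{(i,j,k). i \<in> {1,2,3::nat} \<and> j \<in> {1,2,3} \<and> k \<in> {1,2,3} \<and> i \<noteq> j \<and> j \<noteq> k \<and> i \<noteq> k}.
              prob \<rho> a i * prob \<rho> b j * coherence \<alpha> k (cond_state \<rho> a i) * coherence \<alpha> k (cond_state \<rho> b j))
         \<le> 2 * Omega \<alpha>"
proof -
  obtain L :: "nat set" and P :: "nat \<Rightarrow> real" and pl :: "nat \<Rightarrow> nat \<Rightarrow> nat \<Rightarrow> real" and \<sigma> :: "nat \<Rightarrow> qop"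
    where fin: "finite L" and Pnn: "\<forall>l\<in>L. P l \<ge> 0" and Psum: "sum P L = 1"
      and plc: "\<forall>l\<in>L. \<forall>x\<in>{1,2,3}. (\<forall>a\<in>{0,1}. pl a x l \<ge> 0) \<and> pl 0 x l + pl 1 x l = 1"
      and dens: "\<forall>l\<in>L. density (\<sigma> l)"
      and dec: "\<forall>a\<in>{0,1}. \<forall>x\<in>{1,2,3}. \<rho> a x = (\<Sum>l\<in>L. (P l * pl a x l) *\<^sub>R \<sigma> l)"
    using assms(2) unfolding has_LHS_def by blast
  have psdr: "psd (\<rho> a i)" if "a \<in> {0,1}" "i \<in> {1,2,3}" for a i
    using assms(1) that unfolding assemblage_def by blast
  define c where "c l k = coherence L1 k (\<sigma> l)" for l k
  define Y where "Y a i k = (\<Sum>l\<in>L. P l * pl a i l * c l k)" for a i k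
  define M where "M k = (\<Sum>l\<in>L. P l * c l k)" for k
  define X where "X a i k = prob \<rho> a i * coherence \<alpha> k (cond_state \<rho> a i)" for a i k
  have XY: "0 \<le> X a i k \<and> X a i k \<le> Y a i k" if ai: "a \<in> {0,1}" "i \<in> {1,2,3}" for a i k
  proof -
    note xb = X_bounds[of \<rho> a i \<alpha> k, OF psdr[OF ai]]
    have "coherence L1 k (\<rho> a i) = coherence L1 k (\<Sum>l\<in>L. (P l * pl a i l) *\<^sub>R \<sigma> l)"
      using bspec[OF bspec[OF dec ai(1)] ai(2)] by simp
    also have "\<dots> \<le> (\<Sum>l\<in>L. coherence L1 k ((P l * pl a i l) *\<^sub>R \<sigma> l))" by (rule Cl_sum)
    also have "\<dots> = Y a i k" unfolding Y_def c_def Cl_scaleR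
    proof (rule sum.cong)
      fix l assume l: "l \<in> L"
      then have "P l * pl a i l \<ge> 0" using Pnn plc ai by auto
      then show "\<bar>P l * pl a i l\<bar> * coherence L1 k (\<sigma> l) = P l * pl a i l * coherence L1 k (\<sigma> l)" by simp
    qed simp
    finally show ?thesis using xb unfolding X_def by simp
  qed
  have YM: "Y 0 i k + Y 1 i k = M k" if "i \<in> {1,2,3}" for i k
  proof -
    have "Y 0 i k + Y 1 i k = (\<Sum>l\<in>L. P l * (pl 0 i l + pl 1 i l) * c l k)"
      unfolding Y_def by (simp add: sum.distrib[symmetric] algebra_simps)
    also have "\<dots> = M k" unfolding M_def using plc that by (intro sum.cong) auto
    finally show ?thesis .
  qed
  define T where "T = {(i,j,k). i \<in> {1,2,3::nat} \<and> j \<in> {1,2,3} \<and> k \<in> {1,2,3} \<and> i \<noteq> j \<and> j \<noteq> k \<and> i \<noteq> k}"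
  have Tin: "i \<in> {1,2,3} \<and> j \<in> {1,2,3}" if "(i,j,k) \<in> T" for i j k using that unfolding T_def by auto
  have "(\<Sum>a\<in>{0,1::nat}. \<Sum>b\<in>{0,1::nat}. \<Sum>(i,j,k)\<in>T.
              prob \<rho> a i * prob \<rho> b j * coherence \<alpha> k (cond_state \<rho> a i) * coherence \<alpha> k (cond_state \<rho> b j))
      = (\<Sum>a\<in>{0,1::nat}. \<Sum>b\<in>{0,1::nat}. \<Sum>(i,j,k)\<in>T. X a i k * X b j k)"
    unfolding X_def by (simp add: algebra_simps)
  also have "\<dots> \<le> (\<Sum>a\<in>{0,1::nat}. \<Sum>b\<in>{0,1::nat}. \<Sum>(i,j,k)\<in>T. Y a i k * Y b j k)"
  proof (intro sum_mono, clarify)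
    fix a b i j k assume ab: "a \<in> {0,1::nat}" "b \<in> {0,1::nat}" and t: "(i,j,k) \<in> T"
    note ij = Tin[OF t]
    show "X a i k * X b j k \<le> Y a i k * Y b j k"
      using XY[OF ab(1) conjunct1[OF ij], of k] XY[OF ab(2) conjunct2[OF ij], of k]
      by (intro mult_mono) auto
  qed
  also have "\<dots> = (\<Sum>(i,j,k)\<in>T. M k * M k)"
  proof -
    have "(\<Sum>a\<in>{0,1::nat}. \<Sum>b\<in>{0,1::nat}. \<Sum>(i,j,k)\<in>T. Y a i k * Y b j k)
        = (\<Sum>(i,j,k)\<in>T. (Y 0 i k + Y 1 i k) * (Y 0 j k + Y 1 j k))"
      by (simp add: sum.distrib[symmetric] case_prod_beta algebra_simps)
    also have "\<dots> = (\<Sum>(i,j,k)\<in>T. M k * M k)"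
    proof (rule sum.cong, simp, clarify)
      fix i j k assume "(i,j,k) \<in> T"
      then show "(Y 0 i k + Y 1 i k) * (Y 0 j k + Y 1 j k) = M k * M k" using Tin YM by metis
    qed
    finally show ?thesis .
  qed
  also have "\<dots> = 2 * ((M 1)^2 + (M 2)^2 + (M 3)^2)"
    unfolding T_def triples by (simp add: power2_eq_square)
  also have "\<dots> \<le> 2 * 2"
  proof -
    have j: "(M k)^2 \<le> (\<Sum>l\<in>L. P l * (c l k)^2)" for k unfolding M_def by (rule jensen_sq[OF Pnn Psum])
    have "(M 1)^2 + (M 2)^2 + (M 3)^2 \<le> (\<Sum>l\<in>L. P l * (c l 1)^2) + (\<Sum>l\<in>L. P l * (c l 2)^2) + (\<Sum>l\<in>L. P l * (c l 3)^2)"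
      by (intro add_mono j)
    also have "\<dots> = (\<Sum>l\<in>L. P l * ((c l 1)^2 + (c l 2)^2 + (c l 3)^2))"
      by (simp add: sum.distrib[symmetric] distrib_left)
    also have "\<dots> \<le> (\<Sum>l\<in>L. P l * 2)"
      using Pnn dens Cl_sq_sum unfolding c_def by (intro sum_mono mult_left_mono) auto
    also have "\<dots> = 2" using Psum by (simp add: sum_distrib_right[symmetric])
    finally show ?thesis by simp
  qed
  also have "\<dots> = 2 * Omega \<alpha>" by (simp add: Omega_def)
  finally show ?thesis unfolding T_def .
qed

end
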